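(* Let $S$ be any string of length $n$ satisfying the $\varepsilon$-self-matching property. Then $S$ together with the minimum relative suffix distance decoding algorithm is an $(n,\delta)$-indexing algorithm with at most $n(4\delta+6\varepsilon)$ misdecodings.
   Context: $\mathrm{ED}$ is insertion/deletion edit distance; $S[i,j]$ is positions $i..j$, $S(i,j]=S[i+1,j]$, and for $i<1$, $S[i,j]=\bot^{-i+1}S[1,j]$ with $\bot$ not in the alphabet. $\mathrm{RSD}(S,S')=\max_{k>0}\frac{\mathrm{ED}(S(|S|-k,|S|],S'(|S'|-k,|S'|])}{2k}$. A monotone matching between $S$ and itself is a set of pairs $(a_1,b_1),\dots,(a_m,b_m)$ with $a_1<\dots<a_m$, $b_1<\dots<b_m$, $S[a_i]=S[b_i]$; a pair is bad if $a_i\ne b_i$. $S$ satisfies the $\varepsilon$-self-matching property if every such matching has fewer than $\varepsilon|S|$ bad pairs. Indexing problem: an adversary applies at most $n\delta$ insertions and deletions to $S$, producing $S_\tau$, with an order-preserving alignment in which each $S[i]$ is deleted or delivered unchanged as a unique symbol of $S_\tau$, and other symbols of $S_\tau$ are inserted. An $(n,\delta)$-indexing algorithm outputs for each position of $S_\tau$ either $\bot$ or an index in $\{1,\dots,n\}$; a successfully transmitted position (delivered from $S[i]$) is correctly decoded if the output is $i$; the algorithm has at most $k$ misdecodings if for every such corruption at most $k$ successfully transmitted positions are not correctly decoded. The minimum relative suffix distance decoding algorithm outputs for position $j$ of $S_\tau$ an index $l$ minimizing $\mathrm{RSD}(S[1,l],S_\tau[1,j])$. *)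

theory Defs
  imports Main Complex_Main
begin

fun ED :: "'a list \<Rightarrow> 'a list \<Rightarrow> nat" where
  "ED [] ys = length ys"
| "ED xs [] = length xs"
| "ED (x # xs) (y # ys) =
     min (if x = y then ED xs ys else Suc (ED xs (y # ys)))
         (min (Suc (ED xs (y # ys))) (Suc (ED (x # xs) ys)))"

(* S(|S|-k,|S|], padded on the left with \<bottom> = None when k > |S| *)
definition suffix_pad :: "'a list \<Rightarrow> nat \<Rightarrow> 'a option list" where
  "suffix_pad S k = (let P = replicate k None @ map Some S in drop (length P - k) P)"

definition RSD :: "'a list \<Rightarrow> 'a list \<Rightarrow> real" where
  "RSD S S' = (SUP k\<in>{k::nat. k > 0}. real (ED (suffix_pad S k) (suffix_pad S' k)) / (2 * real k))"

(* monotone matching between S and itself; positions are 1-based *)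
definition monotone_self_matching :: "'a list \<Rightarrow> (nat \<times> nat) set \<Rightarrow> bool" where
  "monotone_self_matching S M \<longleftrightarrow>
     M \<subseteq> {1..length S} \<times> {1..length S} \<and>
     (\<forall>(a,b)\<in>M. S ! (a - 1) = S ! (b - 1)) \<and>
     (\<forall>(a,b)\<in>M. \<forall>(a',b')\<in>M. a < a' \<longleftrightarrow> b < b')"

definition self_matching :: "real \<Rightarrow> 'a list \<Rightarrow> bool" where
  "self_matching \<epsilon> S \<longleftrightarrow>
     (\<forall>M. monotone_self_matching S M \<longrightarrow>
        real (card {(a,b)\<in>M. a \<noteq> b}) < \<epsilon> * real (length S))"

(* A corruption of S into S\<tau> with at most n*\<delta> insertions and deletions:
   D \<subseteq> {1..n} is the set of delivered positions, f i the (1-based) position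
   in S\<tau> of the delivered copy of S[i]; f is strictly increasing on D. *)
definition valid_corruption :: "real \<Rightarrow> 'a list \<Rightarrow> 'a list \<Rightarrow> nat set \<Rightarrow> (nat \<Rightarrow> nat) \<Rightarrow> bool" where
  "valid_corruption \<delta> S St D f \<longleftrightarrow>
     D \<subseteq> {1..length S} \<and>
     f ` D \<subseteq> {1..length St} \<and>
     strict_mono_on D f \<and>
     (\<forall>i\<in>D. St ! (f i - 1) = S ! (i - 1)) \<and>
     real ((length S - card D) + (length St - card D)) \<le> real (length S) * \<delta>"

definition min_RSD_decoding :: "'a list \<Rightarrow> 'a list \<Rightarrow> (nat \<Rightarrow> nat) \<Rightarrow> bool" where
  "min_RSD_decoding S St dec \<longleftrightarrow>
     (\<forall>j\<in>{1..length St}. dec j \<in> {1..length S} \<and>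
        (\<forall>l\<in>{1..length S}. RSD (take (dec j) S) (take j St) \<le> RSD (take l S) (take j St)))"

end

theory Submission
  imports Defs
begin
definition lmatch :: "'a list \<Rightarrow> 'a list \<Rightarrow> (nat \<times> nat) set \<Rightarrow> bool" where
 "lmatch xs ys M \<longleftrightarrow> (\<forall>a b. (a,b)\<in>M \<longrightarrow> a < length xs \<and> b < length ys \<and> xs!a = ys!b)
    \<and> (\<forall>a b a' b'. (a,b)\<in>M \<longrightarrow> (a',b')\<in>M \<longrightarrow> (a < a' \<longleftrightarrow> b < b'))"

lemma lmatch_finite: "lmatch xs ys M \<Longrightarrow> finite M"
proof -
  assume "lmatch xs ys M"
  then have "M \<subseteq> {..<length xs} \<times> {..<length ys}" unfolding lmatch_def by auto
  then show ?thesis by (rule finite_subset) auto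
qed

lemma card_sh1: "card ((\<lambda>(a,b). (Suc a, b)) ` M) = card M"
  by (rule card_image) (auto simp: inj_on_def)
lemma card_sh2: "card ((\<lambda>(a,b). (a, Suc b)) ` M) = card M"
  by (rule card_image) (auto simp: inj_on_def)
lemma card_sh12: "card ((\<lambda>(a,b). (Suc a, Suc b)) ` M) = card M"
  by (rule card_image) (auto simp: inj_on_def)

lemma lmatch_unsh1: "lmatch (x#xs) ys M \<Longrightarrow> lmatch xs ys {(a,b). (Suc a,b)\<in>M}"
  unfolding lmatch_def by (auto; metis Suc_less_eq nth_Cons_Suc)

lemma lmatch_unsh2: "lmatch xs (y#ys) M \<Longrightarrow> lmatch xs ys {(a,b). (a,Suc b)\<in>M}"
  unfolding lmatch_def by (auto; metis Suc_less_eq nth_Cons_Suc)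

lemma lmatch_unsh12: "lmatch (x#xs) (y#ys) M \<Longrightarrow> lmatch xs ys {(a,b). (Suc a,Suc b)\<in>M}"
  unfolding lmatch_def by (auto; metis Suc_less_eq nth_Cons_Suc)

lemma lmatch_sh1: "lmatch xs ys M \<Longrightarrow> lmatch (x#xs) ys ((\<lambda>(a,b). (Suc a, b)) ` M)"
  unfolding lmatch_def by auto
lemma lmatch_sh2: "lmatch xs ys M \<Longrightarrow> lmatch xs (y#ys) ((\<lambda>(a,b). (a, Suc b)) ` M)"
  unfolding lmatch_def by auto
lemma lmatch_sh12: "lmatch xs ys M \<Longrightarrow> lmatch (x#xs) (x#ys) (insert (0,0) ((\<lambda>(a,b). (Suc a, Suc b)) ` M))"
  unfolding lmatch_def by auto

lemma ED_le_match: "lmatch xs ys M \<Longrightarrow> ED xs ys + 2 * card M \<le> length xs + length ys"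
proof (induction xs ys arbitrary: M rule: ED.induct)
  case (1 ys)
  then have "M = {}" unfolding lmatch_def by auto
  then show ?case by simp
next
  case (2 v va)
  then have "M = {}" unfolding lmatch_def by auto
  then show ?case by simp
next
  case (3 x xs y ys)
  have mono: "\<And>a b a' b'. (a,b)\<in>M \<Longrightarrow> (a',b')\<in>M \<Longrightarrow> a < a' \<longleftrightarrow> b < b'"
    using 3(5) unfolding lmatch_def by blast
  have eq: "\<And>a b. (a,b)\<in>M \<Longrightarrow> (x#xs)!a = (y#ys)!b"
    using 3(5) unfolding lmatch_def by blast
  consider (A) "\<forall>(a,b)\<in>M. a \<noteq> 0" | (B) "\<forall>(a,b)\<in>M. b \<noteq> 0"
    | (C) "(0,0) \<in> M" "\<forall>(a,b)\<in>M. (a,b) \<noteq> (0,0) \<longrightarrow> a \<noteq> 0 \<and> b \<noteq> 0"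
  proof (cases "\<forall>(a,b)\<in>M. a \<noteq> 0")
    case True then show ?thesis using that(1) by blast
  next
    case nA: False
    show ?thesis
    proof (cases "\<forall>(a,b)\<in>M. b \<noteq> 0")
      case True then show ?thesis using that(2) by blast
    next
      case nB: False
      from nA nB obtain b a where h1: "(0,b)\<in>M" and h2: "(a,0)\<in>M" by auto
      have z: "(0,0)\<in>M"
      proof (cases "a = 0 \<or> b = 0")
        case True then show ?thesis using h1 h2 by auto
      next
        case False then have "0 < a" "\<not> b < 0" by auto
        then show ?thesis using mono[OF h1 h2] by simp
      qed
      moreover have "\<forall>(a,b)\<in>M. (a,b) \<noteq> (0,0) \<longrightarrow> a \<noteq> 0 \<and> b \<noteq> 0"
      proof -
        { fix a b assume ab: "(a,b)\<in>M" "(a,b)\<noteq>(0,0)"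
          have "a \<noteq> 0 \<and> b \<noteq> 0"
            using mono[OF ab(1) z] mono[OF z ab(1)] ab(2) by auto }
        then show ?thesis by blast
      qed
      ultimately show ?thesis using that(3) by blast
    qed
  qed
  then show ?case
  proof cases
    case A
    define M1 where "M1 = {(a,b). (Suc a, b) \<in> M}"
    have Meq: "M = (\<lambda>(a,b). (Suc a, b)) ` M1"
    proof (rule set_eqI, rule iffI)
      fix p assume "p \<in> M"
      then obtain a b where p: "p = (a,b)" "(a,b)\<in>M" by (cases p) auto
      with A have "a \<noteq> 0" by auto
      then obtain a' where "a = Suc a'" using not0_implies_Suc by blast
      then show "p \<in> (\<lambda>(a,b). (Suc a, b)) ` M1" using p unfolding M1_def by force
    qed (auto simp: M1_def)
    have "lmatch xs (y#ys) M1"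
      unfolding M1_def using 3(5) by (rule lmatch_unsh1)
    then have "ED xs (y#ys) + 2 * card M1 \<le> length xs + length (y#ys)" using 3(3) by blast
    moreover have "card M = card M1" using Meq card_sh1 by metis
    moreover have "ED (x#xs) (y#ys) \<le> Suc (ED xs (y#ys))" by simp
    ultimately show ?thesis by simp
  next
    case B
    define M1 where "M1 = {(a,b). (a, Suc b) \<in> M}"
    have Meq: "M = (\<lambda>(a,b). (a, Suc b)) ` M1"
    proof (rule set_eqI, rule iffI)
      fix p assume "p \<in> M"
      then obtain a b where p: "p = (a,b)" "(a,b)\<in>M" by (cases p) auto
      with B have "b \<noteq> 0" by auto
      then obtain b' where "b = Suc b'" using not0_implies_Suc by blast
      then show "p \<in> (\<lambda>(a,b). (a, Suc b)) ` M1" using p unfolding M1_def by force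
    qed (auto simp: M1_def)
    have "lmatch (x#xs) ys M1"
      unfolding M1_def using 3(5) by (rule lmatch_unsh2)
    then have "ED (x#xs) ys + 2 * card M1 \<le> length (x#xs) + length ys" using 3(4) by blast
    moreover have "card M = card M1" using Meq card_sh2 by metis
    moreover have "ED (x#xs) (y#ys) \<le> Suc (ED (x#xs) ys)" by simp
    ultimately show ?thesis by simp
  next
    case C
    define M1 where "M1 = {(a,b). (Suc a, Suc b) \<in> M}"
    have Meq: "M = insert (0,0) ((\<lambda>(a,b). (Suc a, Suc b)) ` M1)"
    proof (rule set_eqI, rule iffI)
      fix p assume "p \<in> M"
      then obtain a b where p: "p = (a,b)" "(a,b)\<in>M" by (cases p) auto
      show "p \<in> insert (0,0) ((\<lambda>(a,b). (Suc a, Suc b)) ` M1)"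
      proof (cases "(a,b) = (0,0)")
        case True then show ?thesis using p by simp
      next
        case False
        with C p have "a \<noteq> 0" "b \<noteq> 0" by auto
        then obtain a' b' where "a = Suc a'" "b = Suc b'" using not0_implies_Suc by blast
        then show ?thesis using p unfolding M1_def by force
      qed
    qed (use C in \<open>auto simp: M1_def\<close>)
    have xy: "x = y" using eq[OF C(1)] by simp
    have "lmatch xs ys M1"
      unfolding M1_def using 3(5) by (rule lmatch_unsh12)
    then have "ED xs ys + 2 * card M1 \<le> length xs + length ys" using 3(1) xy by blast
    moreover have "card M = Suc (card M1)"
    proof -
      have "finite M1" using \<open>lmatch xs ys M1\<close> lmatch_finite by blast
      moreover have "(0,0) \<notin> (\<lambda>(a,b). (Suc a, Suc b)) ` M1" by auto
      ultimately show ?thesis using Meq card_sh12 by (metis card_insert_disjoint finite_imageI)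
    qed
    moreover have "ED (x#xs) (y#ys) \<le> ED xs ys" using xy by simp
    ultimately show ?thesis by simp
  qed
qed

lemma ED_le_len: "ED xs ys \<le> length xs + length ys"
  using ED_le_match[of xs ys "{}"] unfolding lmatch_def by simp

lemma ED_match: "\<exists>M. lmatch xs ys M \<and> length xs + length ys \<le> ED xs ys + 2 * card M"
proof (induction xs ys rule: ED.induct)
  case (1 ys)
  show ?case by (rule exI[of _ "{}"]) (simp add: lmatch_def)
next
  case (2 v va)
  show ?case by (rule exI[of _ "{}"]) (simp add: lmatch_def)
next
  case (3 x xs y ys)
  consider (A) "x = y" "ED (x#xs) (y#ys) = ED xs ys"
    | (B) "ED (x#xs) (y#ys) = Suc (ED xs (y#ys))"
    | (C) "ED (x#xs) (y#ys) = Suc (ED (x#xs) ys)"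
  proof -
    have e: "ED (x#xs) (y#ys) = min (if x = y then ED xs ys else Suc (ED xs (y#ys)))
         (min (Suc (ED xs (y#ys))) (Suc (ED (x#xs) ys)))" by simp
    have m3: "\<And>a b c::nat. min a (min b c) = a \<or> min a (min b c) = b \<or> min a (min b c) = c"
      by linarith
    show thesis
    proof (cases "x = y")
      case True
      then show ?thesis using e m3[of "ED xs ys" "Suc (ED xs (y#ys))" "Suc (ED (x#xs) ys)"] that by auto
    next
      case False
      then show ?thesis using e m3[of "Suc (ED xs (y#ys))" "Suc (ED xs (y#ys))" "Suc (ED (x#xs) ys)"] that by auto
    qed
  qed
  then show ?case
  proof cases
    case A
    then obtain M where M: "lmatch xs ys M" "length xs + length ys \<le> ED xs ys + 2 * card M"
      using 3(1) by blast
    define M' where "M' = insert (0,0) ((\<lambda>(a,b). (Suc a, Suc b)) ` M)"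
    have "lmatch (x#xs) (y#ys) M'"
      using lmatch_sh12[OF M(1), of x] A(1) unfolding M'_def by simp
    moreover have "card M' = Suc (card M)"
    proof -
      have "finite M" using M(1) lmatch_finite by blast
      moreover have "(0,0) \<notin> (\<lambda>(a,b). (Suc a, Suc b)) ` M" by auto
      ultimately show ?thesis unfolding M'_def using card_sh12 by (metis card_insert_disjoint finite_imageI)
    qed
    ultimately show ?thesis using M(2) A(2) by (intro exI[of _ M']) simp
  next
    case B
    then obtain M where M: "lmatch xs (y#ys) M" "length xs + length (y#ys) \<le> ED xs (y#ys) + 2 * card M"
      using 3(3) by blast
    define M' where "M' = (\<lambda>(a,b). (Suc a, b)) ` M"
    have "lmatch (x#xs) (y#ys) M'"
      using lmatch_sh1[OF M(1)] unfolding M'_def by simp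
    moreover have "card M' = card M" unfolding M'_def by (rule card_sh1)
    ultimately show ?thesis using M(2) B by (intro exI[of _ M']) simp
  next
    case C
    then obtain M where M: "lmatch (x#xs) ys M" "length (x#xs) + length ys \<le> ED (x#xs) ys + 2 * card M"
      using 3(4) by blast
    define M' where "M' = (\<lambda>(a,b). (a, Suc b)) ` M"
    have "lmatch (x#xs) (y#ys) M'"
      using lmatch_sh2[OF M(1)] unfolding M'_def by simp
    moreover have "card M' = card M" unfolding M'_def by (rule card_sh2)
    ultimately show ?thesis using M(2) C by (intro exI[of _ M']) simp
  qed
qed

lemma lmatch_fun1: "lmatch xs ys M \<Longrightarrow> (a,b)\<in>M \<Longrightarrow> (a,b')\<in>M \<Longrightarrow> b = b'"
  unfolding lmatch_def by (metis less_irrefl nat_neq_iff)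
lemma lmatch_fun2: "lmatch xs ys M \<Longrightarrow> (a,b)\<in>M \<Longrightarrow> (a',b)\<in>M \<Longrightarrow> a = a'"
  unfolding lmatch_def by (metis less_irrefl nat_neq_iff)

lemma lmatch_comp:
  assumes m1: "lmatch xs ys M1" and m2: "lmatch zs ys M2"
  shows "\<exists>N. lmatch xs zs N \<and> card M1 + card M2 \<le> card N + length ys"
proof -
  define N where "N = {(a,c). \<exists>b. (a,b)\<in>M1 \<and> (c,b)\<in>M2}"
  have p1: "\<And>a c. (a,c)\<in>N \<Longrightarrow> a < length xs \<and> c < length zs \<and> xs ! a = zs ! c"
  proof -
    fix a c assume "(a,c)\<in>N"
    then obtain b where "(a,b)\<in>M1" "(c,b)\<in>M2" unfolding N_def by auto
    then show "a < length xs \<and> c < length zs \<and> xs ! a = zs ! c"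
      using m1 m2 unfolding lmatch_def by metis
  qed
  have p2: "\<And>a c a' c'. (a,c)\<in>N \<Longrightarrow> (a',c')\<in>N \<Longrightarrow> a < a' \<longleftrightarrow> c < c'"
  proof -
    fix a c a' c' assume "(a,c)\<in>N" "(a',c')\<in>N"
    then obtain b b' where "(a,b)\<in>M1" "(c,b)\<in>M2" "(a',b')\<in>M1" "(c',b')\<in>M2" unfolding N_def by auto
    then show "a < a' \<longleftrightarrow> c < c'"
      using m1 m2 unfolding lmatch_def by metis
  qed
  have lN: "lmatch xs zs N" unfolding lmatch_def using p1 p2 by blast
  have fin1: "finite M1" and fin2: "finite M2" using m1 m2 lmatch_finite by auto
  have finN: "finite N" using lN lmatch_finite by auto
  have c1: "card (snd ` M1) = card M1"
    by (rule card_image) (auto simp: inj_on_def dest: lmatch_fun2[OF m1])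
  have c2: "card (snd ` M2) = card M2"
    by (rule card_image) (auto simp: inj_on_def dest: lmatch_fun2[OF m2])
  have "snd ` M1 \<union> snd ` M2 \<subseteq> {..<length ys}"
    using m1 m2 unfolding lmatch_def by force
  then have cu: "card (snd ` M1 \<union> snd ` M2) \<le> length ys"
    by (metis card_lessThan card_mono finite_lessThan)
  have cui: "card (snd ` M1 \<union> snd ` M2) + card (snd ` M1 \<inter> snd ` M2) = card (snd ` M1) + card (snd ` M2)"
    using fin1 fin2 by (intro card_Un_Int[symmetric]) auto
  define g where "g = (\<lambda>(a,c). SOME b. (a,b)\<in>M1 \<and> (c,b)\<in>M2)"
  have "snd ` M1 \<inter> snd ` M2 \<subseteq> g ` N"
  proof
    fix b assume "b \<in> snd ` M1 \<inter> snd ` M2"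
    then obtain a c where ac: "(a,b)\<in>M1" "(c,b)\<in>M2" by force
    then have "(a,c)\<in>N" unfolding N_def by auto
    moreover have "g (a,c) = b"
    proof -
      have "\<exists>b. (a,b)\<in>M1 \<and> (c,b)\<in>M2" using ac by auto
      then have "(a, g (a,c))\<in>M1" unfolding g_def by (auto intro: someI2_ex)
      then show ?thesis using lmatch_fun1[OF m1 ac(1)] by simp
    qed
    ultimately show "b \<in> g ` N" by force
  qed
  then have "card (snd ` M1 \<inter> snd ` M2) \<le> card N"
    by (meson card_image_le card_mono finN finite_imageI le_trans)
  then show ?thesis using lN c1 c2 cu cui by (intro exI[of _ N]) linarith
qed

lemma len_suffix_pad[simp]: "length (suffix_pad xs k) = k"
  unfolding suffix_pad_def Let_def by simp

lemma nth_suffix_pad: "t < k \<Longrightarrow> suffix_pad xs k ! t =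
   (if k \<le> t + length xs then Some (xs ! (t + length xs - k)) else None)"
  unfolding suffix_pad_def Let_def by (auto simp: nth_append intro!: arg_cong[where f="nth xs"])

definition rt :: "'a list \<Rightarrow> 'a list \<Rightarrow> nat \<Rightarrow> real" where
  "rt X Y k = real (ED (suffix_pad X k) (suffix_pad Y k)) / (2 * real k)"

lemma rt_le1: "rt X Y k \<le> 1"
proof (cases "k = 0")
  case True then show ?thesis by (simp add: rt_def)
next
  case False
  have "ED (suffix_pad X k) (suffix_pad Y k) \<le> 2 * k" using ED_le_len[of "suffix_pad X k" "suffix_pad Y k"] by simp
  then have "real (ED (suffix_pad X k) (suffix_pad Y k)) \<le> 2 * real k" by linarith
  then show ?thesis using False by (simp add: rt_def divide_le_eq)
qed

lemma RSD_eq: "RSD X Y = (SUP k\<in>{k::nat. k > 0}. rt X Y k)"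
  unfolding RSD_def rt_def by simp

lemma bdd_rt: "bdd_above ((rt X Y) ` A)"
  by (rule bdd_aboveI[of _ 1]) (auto intro: rt_le1)

lemma RSD_ge: "0 < k \<Longrightarrow> rt X Y k \<le> RSD X Y"
  unfolding RSD_eq by (rule cSUP_upper) (auto intro: bdd_rt)

lemma RSD_gt: "c < RSD X Y \<Longrightarrow> \<exists>k>0. c < rt X Y k"
  unfolding RSD_eq by (subst (asm) less_cSUP_iff) (auto intro: bdd_rt)

definition compat :: "(nat \<Rightarrow> nat) \<Rightarrow> (nat \<Rightarrow> nat) \<Rightarrow> nat \<Rightarrow> nat \<Rightarrow> bool" where
  "compat v g p q \<longleftrightarrow> (v p + g p \<le> v q \<and> v p + g q \<le> v q) \<or> (v q + g q \<le> v p \<and> v q + g p \<le> v p)"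

lemma vitali:
  fixes P :: "nat set" and v g :: "nat \<Rightarrow> nat" and Ml :: "nat \<Rightarrow> (nat \<times> nat) set" and Q :: "nat \<Rightarrow> nat \<Rightarrow> bool"
  assumes "finite P"
    and pt: "\<forall>p\<in>P. p = v p \<or> p = v p + g p"
    and gpos: "\<forall>p\<in>P. 0 < g p"
    and win: "\<forall>p\<in>P. \<forall>a b. (a,b) \<in> Ml p \<longrightarrow> v p < a + g p \<and> a \<le> v p \<and> v p < b \<and> b \<le> v p + g p \<and> Q a b"
    and mon: "\<forall>p\<in>P. \<forall>a b a' b'. (a,b)\<in>Ml p \<longrightarrow> (a',b')\<in>Ml p \<longrightarrow> (a<a' \<longleftrightarrow> b<b')"
    and big: "\<forall>p\<in>P. g p \<le> 2 * card (Ml p) \<and> finite (Ml p)"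
  shows "\<exists>M. (\<forall>a b. (a,b)\<in>M \<longrightarrow> Q a b \<and> a < b) \<and> (\<forall>a b a' b'. (a,b)\<in>M \<longrightarrow> (a',b')\<in>M \<longrightarrow> (a<a' \<longleftrightarrow> b<b'))
     \<and> card P \<le> 6 * card M \<and> finite M \<and> (\<forall>x\<in>M. \<exists>p\<in>P. x \<in> Ml p)"
  using assms
proof (induction "card P" arbitrary: P rule: less_induct)
  case less
  show ?case
  proof (cases "P = {}")
    case True
    then show ?thesis by (intro exI[of _ "{}"]) auto
  next
    case False
    obtain C where CP: "C \<in> P" and Cmax: "\<forall>p\<in>P. g p \<le> g C"
    proof -
      have "Max (g ` P) \<in> g ` P" using False less.prems(1) by auto
      then obtain C where "C \<in> P" "g C = Max (g ` P)" by auto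
      moreover have "\<forall>p\<in>P. g p \<le> Max (g ` P)" using less.prems(1) by auto
      ultimately show ?thesis using that by auto
    qed
    define P' where "P' = {p\<in>P. p \<noteq> C \<and> compat v g p C}"
    have P'sub: "P' \<subseteq> P" unfolding P'_def by auto
    have fP': "finite P'" using P'sub less.prems(1) finite_subset by blast
    have "card P' < card P"
      using CP P'sub less.prems(1) unfolding P'_def by (intro psubset_card_mono) auto
    then obtain M' where M': "\<forall>a b. (a,b)\<in>M' \<longrightarrow> Q a b \<and> a < b"
      "\<forall>a b a' b'. (a,b)\<in>M' \<longrightarrow> (a',b')\<in>M' \<longrightarrow> (a<a' \<longleftrightarrow> b<b')"
      "card P' \<le> 6 * card M'" "finite M'" "\<forall>x\<in>M'. \<exists>p\<in>P'. x \<in> Ml p"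
    proof -
      have h2: "\<forall>p\<in>P'. p = v p \<or> p = v p + g p" using less.prems(2) P'sub by blast
      have h3: "\<forall>p\<in>P'. 0 < g p" using less.prems(3) P'sub by blast
      have h4: "\<forall>p\<in>P'. \<forall>a b. (a,b) \<in> Ml p \<longrightarrow> v p < a + g p \<and> a \<le> v p \<and> v p < b \<and> b \<le> v p + g p \<and> Q a b"
        using less.prems(4) P'sub by blast
      have h5: "\<forall>p\<in>P'. \<forall>a b a' b'. (a,b)\<in>Ml p \<longrightarrow> (a',b')\<in>Ml p \<longrightarrow> (a<a' \<longleftrightarrow> b<b')"
        using less.prems(5) P'sub by blast
      have h6: "\<forall>p\<in>P'. g p \<le> 2 * card (Ml p) \<and> finite (Ml p)" using less.prems(6) P'sub by blast
      show ?thesis using less.hyps[OF \<open>card P' < card P\<close> fP' h2 h3 h4 h5 h6] that by blast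
    qed
    define M where "M = M' \<union> Ml C"
    have winC: "\<And>a b. (a,b)\<in>Ml C \<Longrightarrow> v C < a + g C \<and> a \<le> v C \<and> v C < b \<and> b \<le> v C + g C \<and> Q a b"
      using less.prems(4) CP by blast
    have order: "\<And>a b a' b'. (a,b)\<in>M' \<Longrightarrow> (a',b')\<in>Ml C \<Longrightarrow> (a < a' \<and> b < b') \<or> (a' < a \<and> b' < b)"
    proof -
      fix a b a' b' assume ab: "(a,b)\<in>M'" and ab': "(a',b')\<in>Ml C"
      obtain p where p: "p\<in>P'" "(a,b)\<in>Ml p" using M'(5) ab by blast
      have pP: "p \<in> P" using p(1) P'sub by auto
      have wp: "v p < a + g p \<and> a \<le> v p \<and> v p < b \<and> b \<le> v p + g p"
        using less.prems(4) pP p(2) by blast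
      have wc: "v C < a' + g C \<and> a' \<le> v C \<and> v C < b' \<and> b' \<le> v C + g C" using winC[OF ab'] by blast
      have "compat v g p C" using p(1) unfolding P'_def by auto
      then show "(a < a' \<and> b < b') \<or> (a' < a \<and> b' < b)"
        unfolding compat_def using wp wc by linarith
    qed
    have Mprop1: "\<forall>a b. (a,b)\<in>M \<longrightarrow> Q a b \<and> a < b"
      using M'(1) winC unfolding M_def by (metis Un_iff le_less_trans)
    have Mprop2: "\<forall>a b a' b'. (a,b)\<in>M \<longrightarrow> (a',b')\<in>M \<longrightarrow> (a<a' \<longleftrightarrow> b<b')"
    proof (intro allI impI)
      fix a b a' b' assume h: "(a,b)\<in>M" "(a',b')\<in>M"
      show "a<a' \<longleftrightarrow> b<b'"
      proof (cases "(a,b)\<in>M'")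
        case True
        show ?thesis
        proof (cases "(a',b')\<in>M'")
          case True then show ?thesis using M'(2) \<open>(a,b)\<in>M'\<close> by blast
        next
          case False then have "(a',b')\<in>Ml C" using h unfolding M_def by auto
          then show ?thesis using order[OF \<open>(a,b)\<in>M'\<close> \<open>(a',b')\<in>Ml C\<close>] by auto
        qed
      next
        case False then have c1: "(a,b)\<in>Ml C" using h unfolding M_def by auto
        show ?thesis
        proof (cases "(a',b')\<in>M'")
          case True then show ?thesis using order[OF True c1] by auto
        next
          case False then have "(a',b')\<in>Ml C" using h unfolding M_def by auto
          then show ?thesis using less.prems(5) CP c1 by blast
        qed
      qed
    qed
    have disj: "M' \<inter> Ml C = {}"
      using order by fastforce
    have fC: "finite (Ml C)" using less.prems(6) CP by blast
    have cardM: "card M = card M' + card (Ml C)"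
      unfolding M_def using disj fC M'(4) by (simp add: card_Un_disjoint)
    have gC: "g C \<le> 2 * card (Ml C)" using less.prems(6) CP by blast
    have rest: "P - P' \<subseteq> {v C + 1 - g C ..< v C + 2 * g C}"
    proof
      fix x assume x: "x \<in> P - P'"
      have xP: "x \<in> P" using x by auto
      have gx: "0 < g x" "g x \<le> g C" using less.prems(3) xP Cmax by auto
      have ptx: "x = v x \<or> x = v x + g x" using less.prems(2) xP by auto
      show "x \<in> {v C + 1 - g C ..< v C + 2 * g C}"
      proof (cases "x = C")
        case True then show ?thesis using ptx gx by auto
      next
        case False
        then have "\<not> compat v g x C" using x unfolding P'_def by auto
        then have "v C < v x + g C" "v x < v C + g C" unfolding compat_def using gx by linarith+
        then show ?thesis using ptx gx by auto
      qed
    qed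
    have "card (P - P') \<le> 3 * g C"
    proof -
      have "card (P - P') \<le> card {v C + 1 - g C ..< v C + 2 * g C}"
        using rest by (intro card_mono) auto
      also have "\<dots> \<le> 3 * g C" by simp
      finally show ?thesis .
    qed
    moreover have "card P \<le> card P' + card (P - P')"
    proof -
      have "card P = card (P - P') + card P'" using P'sub fP' less.prems(1) by (metis card_Diff_subset card_mono le_add_diff_inverse2)
      then show ?thesis by simp
    qed
    ultimately have "card P \<le> 6 * card M" using M'(3) cardM gC by linarith
    moreover have "finite M" unfolding M_def using M'(4) fC by auto
    moreover have "\<forall>x\<in>M. \<exists>p\<in>P. x \<in> Ml p" unfolding M_def using M'(5) P'sub CP by blast
    ultimately show ?thesis using Mprop1 Mprop2 by blast
  qed
qed



locale ext_corr =
  fixes Dp :: "int set" and F :: "int \<Rightarrow> int"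
  assumes mono: "\<And>x y. x\<in>Dp \<Longrightarrow> y\<in>Dp \<Longrightarrow> x < y \<Longrightarrow> F x < F y"
    and finD: "finite (- Dp)" and finF: "finite (- (F ` Dp))"
begin

lemma mono_iff: "x\<in>Dp \<Longrightarrow> y\<in>Dp \<Longrightarrow> F x < F y \<longleftrightarrow> x < y"
  by (metis mono not_less_iff_gr_or_eq order_less_imp_not_less)
lemma mono_le_iff: "x\<in>Dp \<Longrightarrow> y\<in>Dp \<Longrightarrow> F x \<le> F y \<longleftrightarrow> x \<le> y"
  by (meson mono_iff not_less)
lemma inj: "inj_on F Dp"
  by (metis inj_onI mono_iff order_less_irrefl not_less_iff_gr_or_eq)

definition "del p k = card {x. p - int k < x \<and> x \<le> p \<and> x \<notin> Dp}"
definition "ins p k = card {y. F p - int k < y \<and> y \<le> F p \<and> y \<notin> F ` Dp}"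
definition "Q1 p k = {x\<in>Dp. p - int k < x \<and> x \<le> p}"
definition "Q2 p k = {x\<in>Dp. F p - int k < F x \<and> F x \<le> F p}"

lemma card_ioc: "card {x::int. a - int k < x \<and> x \<le> a} = k"
proof -
  have "{x::int. a - int k < x \<and> x \<le> a} = {a - int k <.. a}" by auto
  then show ?thesis by simp
qed

lemma Q1_card: "card (Q1 p k) + del p k = k"
proof -
  have e: "{x::int. p - int k < x \<and> x \<le> p} = Q1 p k \<union> {x. p - int k < x \<and> x \<le> p \<and> x \<notin> Dp}"
    unfolding Q1_def by auto
  have "card (Q1 p k \<union> {x. p - int k < x \<and> x \<le> p \<and> x \<notin> Dp}) = card (Q1 p k) + del p k"
    unfolding del_def
  proof (rule card_Un_disjoint)
    show "finite (Q1 p k)" unfolding Q1_def by (rule finite_subset[of _ "{p - int k <.. p}"]) auto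
    show "finite {x. p - int k < x \<and> x \<le> p \<and> x \<notin> Dp}"
      by (rule finite_subset[of _ "{p - int k <.. p}"]) auto
    show "Q1 p k \<inter> {x. p - int k < x \<and> x \<le> p \<and> x \<notin> Dp} = {}" unfolding Q1_def by auto
  qed
  then show ?thesis using card_ioc[of p k] e by simp
qed

lemma Q2_card: assumes "p \<in> Dp" shows "card (Q2 p k) + ins p k = k"
proof -
  have e: "{y::int. F p - int k < y \<and> y \<le> F p} = F ` Q2 p k \<union> {y. F p - int k < y \<and> y \<le> F p \<and> y \<notin> F ` Dp}"
    unfolding Q2_def by auto
  have "card (F ` Q2 p k \<union> {y. F p - int k < y \<and> y \<le> F p \<and> y \<notin> F ` Dp}) = card (F ` Q2 p k) + ins p k"
    unfolding ins_def
  proof (rule card_Un_disjoint)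
    show "finite (F ` Q2 p k)" by (rule finite_subset[of _ "{F p - int k <.. F p}"]) (auto simp: Q2_def)
    show "finite {y. F p - int k < y \<and> y \<le> F p \<and> y \<notin> F ` Dp}"
      by (rule finite_subset[of _ "{F p - int k <.. F p}"]) auto
    show "F ` Q2 p k \<inter> {y. F p - int k < y \<and> y \<le> F p \<and> y \<notin> F ` Dp} = {}" unfolding Q2_def by auto
  qed
  moreover have "card (F ` Q2 p k) = card (Q2 p k)"
  proof (rule card_image)
    show "inj_on F (Q2 p k)" using inj by (rule inj_on_subset) (auto simp: Q2_def)
  qed
  ultimately show ?thesis using card_ioc[of "F p" k] e by simp
qed

lemma Q1_fin: "finite (Q1 p k)"
  unfolding Q1_def by (rule finite_subset[of _ "{p - int k <.. p}"]) auto

lemma Q2_fin: "finite (Q2 p k)"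
proof -
  have "F ` Q2 p k \<subseteq> {F p - int k <.. F p}" unfolding Q2_def by auto
  then have "finite (F ` Q2 p k)" by (rule finite_subset) auto
  moreover have "inj_on F (Q2 p k)" using inj unfolding Q2_def by (rule inj_on_subset) auto
  ultimately show ?thesis using finite_imageD by blast
qed

lemma Q2_le: "p \<in> Dp \<Longrightarrow> x \<in> Q2 p k \<Longrightarrow> x \<le> p"
  unfolding Q2_def using mono_le_iff by auto

lemma chain: assumes "p \<in> Dp" shows "Q1 p k \<subseteq> Q2 p k \<or> Q2 p k \<subseteq> Q1 p k"
proof (rule ccontr)
  assume "\<not> ?thesis"
  then obtain x y where x: "x \<in> Q1 p k" "x \<notin> Q2 p k" and y: "y \<in> Q2 p k" "y \<notin> Q1 p k" by auto
  have xD: "x \<in> Dp" "x \<le> p" "p - int k < x" using x unfolding Q1_def by auto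
  have yD: "y \<in> Dp" "y \<le> p" using y Q2_le[OF assms] unfolding Q2_def by auto
  have "F x \<le> F p" using mono_le_iff xD assms by auto
  then have Fx: "F x \<le> F p - int k" using x xD unfolding Q2_def by auto
  have "y \<le> p - int k" using y yD unfolding Q1_def by auto
  then have "y < x" using xD by auto
  then have "F y < F x" using mono xD yD by auto
  moreover have "F p - int k < F y" using y unfolding Q2_def by auto
  ultimately show False using Fx by auto
qed

lemma Q_union_card: assumes "p \<in> Dp" shows "card (Q1 p k \<union> Q2 p k) \<le> k"
  using chain[OF assms] Q1_card[of p k] Q2_card[OF assms, of k]
  by (metis le_add1 subset_Un_eq sup_commute)

lemma Q_inter_card: assumes "p \<in> Dp" shows "k \<le> card (Q1 p k \<inter> Q2 p k) + del p k + ins p k"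
  using chain[OF assms] Q1_card[of p k] Q2_card[OF assms, of k]
  by (metis Int_absorb1 Int_absorb2 add.commute le_add2 trans_le_add2 add_le_cancel_left le_refl add.assoc)

lemma arith_aux: "(cP::nat) = cP' + r \<Longrightarrow> r \<le> k \<Longrightarrow> k \<le> 4*(d+i) \<Longrightarrow> cP' \<le> 4*(x1+y1)
   \<Longrightarrow> x1 + d \<le> X \<Longrightarrow> y1 + i \<le> Y \<Longrightarrow> cP \<le> 4*(X+Y)"
  by simp

lemma count:
  assumes "finite P" "P \<subseteq> Dp" "\<forall>p\<in>P. 0 < K p \<and> K p \<le> 4 * (del p (K p) + ins p (K p))"
    "\<forall>p\<in>P. p \<le> A \<and> F p \<le> B"
  shows "card P \<le> 4 * (card {x. x \<le> A \<and> x \<notin> Dp} + card {y. y \<le> B \<and> y \<notin> F ` Dp})"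
  using assms
proof (induction "card P" arbitrary: P A B rule: less_induct)
  case less
  show ?case
  proof (cases "P = {}")
    case True then show ?thesis by simp
  next
    case False
    define p where "p = Max P"
    have pP: "p \<in> P" unfolding p_def using False less.prems(1) by auto
    have pmax: "\<forall>q\<in>P. q \<le> p" unfolding p_def using less.prems(1) by auto
    have pD: "p \<in> Dp" using pP less.prems(2) by auto
    define k where "k = K p"
    have kpos: "0 < k" and kle: "k \<le> 4 * (del p k + ins p k)" using less.prems(3) pP unfolding k_def by auto
    define P' where "P' = {q\<in>P. q \<le> p - int k \<and> F q \<le> F p - int k}"
    have P'sub: "P' \<subseteq> P" unfolding P'_def by auto
    have fP': "finite P'" using P'sub less.prems(1) finite_subset by blast
    have "p \<notin> P'" unfolding P'_def using kpos by auto
    then have "card P' < card P" using pP P'sub less.prems(1) by (intro psubset_card_mono) auto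
    then have IH: "card P' \<le> 4 * (card {x. x \<le> p - int k \<and> x \<notin> Dp} + card {y. y \<le> F p - int k \<and> y \<notin> F ` Dp})"
    proof -
      have a2: "P' \<subseteq> Dp" using P'sub less.prems(2) by auto
      have a3: "\<forall>p\<in>P'. 0 < K p \<and> K p \<le> 4 * (del p (K p) + ins p (K p))" using P'sub less.prems(3) by blast
      have a4: "\<forall>q\<in>P'. q \<le> p - int k \<and> F q \<le> F p - int k" unfolding P'_def by auto
      show ?thesis by (rule less.hyps[OF \<open>card P' < card P\<close> fP' a2 a3 a4])
    qed
    have "P - P' \<subseteq> Q1 p k \<union> Q2 p k"
    proof
      fix q assume q: "q \<in> P - P'"
      then have qD: "q \<in> Dp" "q \<le> p" using less.prems(2) pmax by auto
      then have "F q \<le> F p" using mono_le_iff pD by auto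
      then show "q \<in> Q1 p k \<union> Q2 p k" using q qD unfolding P'_def Q1_def Q2_def by auto
    qed
    then have "card (P - P') \<le> card (Q1 p k \<union> Q2 p k)"
      using Q1_fin Q2_fin by (intro card_mono) auto
    then have "card (P - P') \<le> k"
      using Q_union_card[OF pD, of k] by linarith
    moreover have "card P = card P' + card (P - P')"
      using card_Diff_subset[OF fP' P'sub] card_mono[OF less.prems(1) P'sub] by linarith
    moreover have e1: "card {x. x \<le> p - int k \<and> x \<notin> Dp} + del p k \<le> card {x. x \<le> A \<and> x \<notin> Dp}"
    proof -
      have "{x. x \<le> p - int k \<and> x \<notin> Dp} \<union> {x. p - int k < x \<and> x \<le> p \<and> x \<notin> Dp} \<subseteq> {x. x \<le> A \<and> x \<notin> Dp}"
        using less.prems(4) pP by auto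
      moreover have "finite {x. x \<le> A \<and> x \<notin> Dp}" by (rule finite_subset[OF _ finD]) auto
      ultimately have "card ({x. x \<le> p - int k \<and> x \<notin> Dp} \<union> {x. p - int k < x \<and> x \<le> p \<and> x \<notin> Dp}) \<le> card {x. x \<le> A \<and> x \<notin> Dp}"
        by (rule card_mono[rotated])
      moreover have "card ({x. x \<le> p - int k \<and> x \<notin> Dp} \<union> {x. p - int k < x \<and> x \<le> p \<and> x \<notin> Dp})
          = card {x. x \<le> p - int k \<and> x \<notin> Dp} + del p k"
        unfolding del_def
        by (rule card_Un_disjoint) (auto intro: finite_subset[OF _ finD])
      ultimately show ?thesis by simp
    qed
    moreover have e2: "card {y. y \<le> F p - int k \<and> y \<notin> F ` Dp} + ins p k \<le> card {y. y \<le> B \<and> y \<notin> F ` Dp}"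
    proof -
      have "{y. y \<le> F p - int k \<and> y \<notin> F ` Dp} \<union> {y. F p - int k < y \<and> y \<le> F p \<and> y \<notin> F ` Dp} \<subseteq> {y. y \<le> B \<and> y \<notin> F ` Dp}"
        using less.prems(4) pP by auto
      moreover have "finite {y. y \<le> B \<and> y \<notin> F ` Dp}" by (rule finite_subset[OF _ finF]) auto
      ultimately have "card ({y. y \<le> F p - int k \<and> y \<notin> F ` Dp} \<union> {y. F p - int k < y \<and> y \<le> F p \<and> y \<notin> F ` Dp}) \<le> card {y. y \<le> B \<and> y \<notin> F ` Dp}"
        by (rule card_mono[rotated])
      moreover have "card ({y. y \<le> F p - int k \<and> y \<notin> F ` Dp} \<union> {y. F p - int k < y \<and> y \<le> F p \<and> y \<notin> F ` Dp})
          = card {y. y \<le> F p - int k \<and> y \<notin> F ` Dp} + ins p k"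
        unfolding ins_def
        by (rule card_Un_disjoint) (auto intro: finite_subset[OF _ finF])
      ultimately show ?thesis by simp
    qed
    ultimately show ?thesis using IH kle arith_aux by blast
  qed
qed

end

lemma nth_pad_take: "x \<le> length S \<Longrightarrow> t < k \<Longrightarrow> suffix_pad (take x S) k ! t =
   (if k \<le> t + x then Some (S ! (t + x - k)) else None)"
  by (simp add: nth_suffix_pad min_def)

lemma local_matching:
  fixes S :: "'a list" and W :: "'a option list"
  assumes g: "0 < g" and v1: "1 \<le> v" and un: "v + g \<le> length S" and lW: "length W = g"
    and e1: "2 * ED (suffix_pad (take v S) g) W \<le> g"
    and e2: "2 * ED (suffix_pad (take (v + g) S) g) W \<le> g"
  shows "\<exists>M. (\<forall>a b. (a,b)\<in>M \<longrightarrow> v < a + g \<and> a \<le> v \<and> v < b \<and> b \<le> v + g \<and>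
              (1 \<le> a \<and> b \<le> length S \<and> S!(a-1) = S!(b-1)))
          \<and> (\<forall>a b a' b'. (a,b)\<in>M \<longrightarrow> (a',b')\<in>M \<longrightarrow> (a<a' \<longleftrightarrow> b<b'))
          \<and> g \<le> 2 * card M \<and> finite M"
proof -
  define X1 where "X1 = suffix_pad (take v S) g"
  define X2 where "X2 = suffix_pad (take (v + g) S) g"
  obtain M1 where M1: "lmatch X1 W M1" "length X1 + length W \<le> ED X1 W + 2 * card M1"
    using ED_match by blast
  obtain M2 where M2: "lmatch X2 W M2" "length X2 + length W \<le> ED X2 W + 2 * card M2"
    using ED_match by blast
  obtain N where N: "lmatch X1 X2 N" "card M1 + card M2 \<le> card N + length W"
    using lmatch_comp[OF M1(1) M2(1)] by blast
  have "3 * g \<le> 4 * card M1" using M1(2) e1 lW unfolding X1_def by simp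
  moreover have "3 * g \<le> 4 * card M2" using M2(2) e2 lW unfolding X2_def by simp
  ultimately have cN: "g \<le> 2 * card N" using N(2) lW by linarith
  have Nprop: "\<And>t t'. (t,t')\<in>N \<Longrightarrow> t < g \<and> t' < g \<and> g \<le> t + v \<and> S ! (t + v - g) = S ! (t' + v)"
  proof -
    fix t t' assume tt: "(t,t')\<in>N"
    then have tl: "t < g" "t' < g" and eq: "X1 ! t = X2 ! t'" using N(1) unfolding lmatch_def X1_def X2_def by auto
    have "X2 ! t' = Some (S ! (t' + v))" unfolding X2_def using tl un by (simp add: nth_pad_take)
    moreover have "X1 ! t = (if g \<le> t + v then Some (S ! (t + v - g)) else None)"
      unfolding X1_def using tl un by (simp add: nth_pad_take)
    ultimately show "t < g \<and> t' < g \<and> g \<le> t + v \<and> S ! (t + v - g) = S ! (t' + v)"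
      using eq tl by (auto split: if_splits)
  qed
  define h where "h = (\<lambda>(t::nat,t'::nat). (t + v + 1 - g, t' + v + 1))"
  define M where "M = h ` N"
  have finN: "finite N" using N(1) lmatch_finite by blast
  have injh: "inj_on h N"
  proof (rule inj_onI)
    fix x y assume "x \<in> N" "y \<in> N" "h x = h y"
    then show "x = y" using Nprop unfolding h_def by (cases x, cases y) fastforce
  qed
  have cMN: "card M = card N" unfolding M_def using injh by (rule card_image)
  moreover have "finite M" unfolding M_def using finN by simp
  moreover have "\<forall>a b. (a,b)\<in>M \<longrightarrow> v < a + g \<and> a \<le> v \<and> v < b \<and> b \<le> v + g \<and>
              (1 \<le> a \<and> b \<le> length S \<and> S!(a-1) = S!(b-1))"
  proof (intro allI impI)
    fix a b assume "(a,b)\<in>M"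
    then obtain t t' where tt: "(t,t')\<in>N" "a = t + v + 1 - g" "b = t' + v + 1" unfolding M_def h_def by auto
    from Nprop[OF tt(1)] tt(2,3) un show "v < a + g \<and> a \<le> v \<and> v < b \<and> b \<le> v + g \<and>
              (1 \<le> a \<and> b \<le> length S \<and> S!(a-1) = S!(b-1))"
      by (auto simp: Suc_diff_le)
  qed
  moreover have "\<forall>a b a' b'. (a,b)\<in>M \<longrightarrow> (a',b')\<in>M \<longrightarrow> (a<a' \<longleftrightarrow> b<b')"
  proof (intro allI impI)
    fix a b a' b' assume "(a,b)\<in>M" "(a',b')\<in>M"
    then obtain t t' s s' where tt: "(t,t')\<in>N" "a = t + v + 1 - g" "b = t' + v + 1"
      and ss: "(s,s')\<in>N" "a' = s + v + 1 - g" "b' = s' + v + 1" unfolding M_def h_def by auto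
    have "t < s \<longleftrightarrow> t' < s'" using N(1) tt(1) ss(1) unfolding lmatch_def by blast
    moreover have "g \<le> t + v" "g \<le> s + v" using Nprop tt(1) ss(1) by auto
    moreover have "a < a' \<longleftrightarrow> t < s" using tt(2) ss(2) \<open>g \<le> t + v\<close> \<open>g \<le> s + v\<close> by arith
    moreover have "b < b' \<longleftrightarrow> t' < s'" using tt(3) ss(3) by arith
    ultimately show "a<a' \<longleftrightarrow> b<b'" by blast
  qed
  ultimately show ?thesis using cN by (intro exI[of _ M]) simp
qed

lemma aux1: "(k::nat) < 2*e \<Longrightarrow> e + 2*c \<le> 2*k \<Longrightarrow> k \<le> c + d + s \<Longrightarrow> k \<le> 4*(d+s)"
  by simp

lemma H_bound:
  fixes S St :: "'a list" and D :: "nat set" and f :: "nat \<Rightarrow> nat"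
  assumes vc: "valid_corruption \<delta> S St D f" and HD: "H \<subseteq> D"
    and Hk: "\<forall>i\<in>H. \<exists>k>0. 1/4 < rt (take i S) (take (f i) St) k"
  shows "card H \<le> 4 * ((length S - card D) + (length St - card D))"
proof -
  define n where "n = length S"
  define m where "m = length St"
  have Dsub: "D \<subseteq> {1..n}" and fD: "f ` D \<subseteq> {1..m}" and sm: "strict_mono_on D f"
    and symb: "\<forall>i\<in>D. St ! (f i - 1) = S ! (i - 1)"
    using vc unfolding valid_corruption_def n_def m_def by auto
  have finD: "finite D" using Dsub finite_subset by blast
  define Dp where "Dp = {p::int. p \<le> 0} \<union> int ` D \<union> {p. p > int n}"
  define F where "F = (\<lambda>p::int. if p \<le> 0 then p else if p > int n then p - int n + int m else int (f (nat p)))"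
  have Fint: "\<And>a. a \<in> D \<Longrightarrow> F (int a) = int (f a)" using Dsub unfolding F_def by force
  have fa: "\<And>a. a \<in> D \<Longrightarrow> 1 \<le> f a \<and> f a \<le> m" using fD by force
  have aD: "\<And>a. a \<in> D \<Longrightarrow> 1 \<le> a \<and> a \<le> n" using Dsub by force
  have monoF: "\<And>x y. x\<in>Dp \<Longrightarrow> y\<in>Dp \<Longrightarrow> x < y \<Longrightarrow> F x < F y"
  proof -
    fix x y assume x: "x\<in>Dp" and y: "y\<in>Dp" and xy: "x < y"
    consider (a) "x \<le> 0" | (b) "x > int n" | (c) a where "a \<in> D" "x = int a"
      using x unfolding Dp_def by auto
    then show "F x < F y"
    proof cases
      case a
      consider (a) "y \<le> 0" | (b) "y > int n" | (c) b where "b \<in> D" "y = int b"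
        using y unfolding Dp_def by auto
      then show ?thesis
      proof cases
        case aa: a then show ?thesis using a xy unfolding F_def by auto
      next
        case b then show ?thesis using a unfolding F_def by auto
      next
        case c then show ?thesis using a Fint[of b] fa[of b] unfolding F_def by auto
      qed
    next
      case b
      then show ?thesis using xy unfolding F_def by auto
    next
      case c
      consider (a) "y \<le> 0" | (b) "y > int n" | (c) b where "b \<in> D" "y = int b"
        using y unfolding Dp_def by auto
      then show ?thesis
      proof cases
        case a then show ?thesis using c xy aD by auto
      next
        case b then show ?thesis using c fa[of a] Fint[of a] unfolding F_def by auto
      next
        case cc: c
        then have "a < b" using c xy by auto
        then have "f a < f b" using sm c(1) cc(1) unfolding strict_mono_on_def by auto
        then show ?thesis using Fint c cc by auto
      qed
    qed
  qed
  have compD: "- Dp = int ` ({1..n} - D)"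
  proof
    show "- Dp \<subseteq> int ` ({1..n} - D)"
    proof
      fix x assume "x \<in> - Dp"
      then have h: "0 < x" "x \<le> int n" "x \<notin> int ` D" unfolding Dp_def by auto
      show "x \<in> int ` ({1..n} - D)"
      proof -
        have xe: "x = int (nat x)" using h by auto
        have "nat x \<notin> D" using h(3) xe by (metis image_eqI)
        moreover have "nat x \<in> {1..n}" using h by auto
        ultimately show ?thesis using xe by (metis Diff_iff image_eqI)
      qed
    qed
    show "int ` ({1..n} - D) \<subseteq> - Dp" unfolding Dp_def by auto
  qed
  have imF: "F ` Dp = {q. q \<le> 0} \<union> int ` (f ` D) \<union> {q. q > int m}"
  proof
    show "F ` Dp \<subseteq> {q. q \<le> 0} \<union> int ` (f ` D) \<union> {q. q > int m}"
      unfolding Dp_def using Fint by (auto simp: F_def)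
    show "{q. q \<le> 0} \<union> int ` (f ` D) \<union> {q. q > int m} \<subseteq> F ` Dp"
    proof
      fix q assume "q \<in> {q. q \<le> 0} \<union> int ` (f ` D) \<union> {q. q > int m}"
      then consider (a) "q \<le> 0" | (b) a where "a \<in> D" "q = int (f a)" | (c) "q > int m" by auto
      then show "q \<in> F ` Dp"
      proof cases
        case a then have "F q = q" "q \<in> Dp" unfolding F_def Dp_def by auto
        then show ?thesis by force
      next
        case b
        then have "F (int a) = q" "int a \<in> Dp" using Fint unfolding Dp_def by auto
        then show ?thesis by force
      next
        case c then have "F (q - int m + int n) = q" "q - int m + int n \<in> Dp" unfolding F_def Dp_def by auto
        then show ?thesis by force
      qed
    qed
  qed
  have compF: "- (F ` Dp) = int ` ({1..m} - f ` D)"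
  proof
    show "- (F ` Dp) \<subseteq> int ` ({1..m} - f ` D)"
    proof
      fix x assume "x \<in> - (F ` Dp)"
      then have h: "0 < x" "x \<le> int m" "x \<notin> int ` (f ` D)" unfolding imF by auto
      show "x \<in> int ` ({1..m} - f ` D)"
      proof -
        have xe: "x = int (nat x)" using h by auto
        have "nat x \<notin> f ` D" using h(3) xe by (metis image_eqI)
        moreover have "nat x \<in> {1..m}" using h by auto
        ultimately show ?thesis using xe by (metis Diff_iff image_eqI)
      qed
    qed
    show "int ` ({1..m} - f ` D) \<subseteq> - (F ` Dp)" unfolding imF by auto
  qed
  interpret E: ext_corr Dp F
  proof
    show "\<And>x y. x\<in>Dp \<Longrightarrow> y\<in>Dp \<Longrightarrow> x < y \<Longrightarrow> F x < F y" by (rule monoF)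
    show "finite (- Dp)" unfolding compD by simp
    show "finite (- (F ` Dp))" unfolding compF by simp
  qed

  have sym2: "\<And>p. p \<in> Dp \<Longrightarrow> p \<le> int n \<Longrightarrow> (if 1 \<le> p then Some (S ! nat (p - 1)) else None)
        = (if 1 \<le> F p then Some (St ! nat (F p - 1)) else None)"
  proof -
    fix p assume p: "p \<in> Dp" "p \<le> int n"
    show "(if 1 \<le> p then Some (S ! nat (p - 1)) else None) = (if 1 \<le> F p then Some (St ! nat (F p - 1)) else None)"
    proof (cases "p \<le> 0")
      case True then show ?thesis unfolding F_def by auto
    next
      case False
      then obtain a where a: "a \<in> D" "p = int a" using p unfolding Dp_def by auto
      have "F p = int (f a)" using Fint a by auto
      moreover have "St ! (f a - 1) = S ! (a - 1)" using symb a by auto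
      moreover have "1 \<le> f a" "1 \<le> a" using fa aD a by auto
      ultimately show ?thesis using a by (auto simp: nat_diff_distrib)
    qed
  qed
  have nthX: "\<And>(X::'a list) (x::nat) (t::nat) (k::nat). x \<le> length X \<Longrightarrow> t < k \<Longrightarrow> suffix_pad (take x X) k ! t =
      (if 1 \<le> int x - int k + 1 + int t then Some (X ! nat (int x - int k + 1 + int t - 1)) else None)"
  proof -
    fix X :: "'a list" and x t k :: nat assume h: "x \<le> length X" "t < k"
    have "suffix_pad (take x X) k ! t = (if k \<le> t + x then Some (X ! (t + x - k)) else None)"
      using nth_pad_take[OF h] .
    moreover have "k \<le> t + x \<longleftrightarrow> 1 \<le> int x - int k + 1 + int t" by linarith
    moreover have "k \<le> t + x \<Longrightarrow> nat (int x - int k + 1 + int t - 1) = t + x - k" by linarith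
    ultimately show "suffix_pad (take x X) k ! t =
      (if 1 \<le> int x - int k + 1 + int t then Some (X ! nat (int x - int k + 1 + int t - 1)) else None)"
      by auto
  qed
  have Md: "\<And>i k. i \<in> D \<Longrightarrow> \<exists>M. lmatch (suffix_pad (take i S) k) (suffix_pad (take (f i) St) k) M
      \<and> card M = card (E.Q1 (int i) k \<inter> E.Q2 (int i) k)"
  proof -
    fix i k assume iD: "i \<in> D"
    define p0 where "p0 = int i - int k + 1"
    define q0 where "q0 = int (f i) - int k + 1"
    define QQ where "QQ = E.Q1 (int i) k \<inter> E.Q2 (int i) k"
    have QQp: "\<And>p. p \<in> QQ \<Longrightarrow> p \<in> Dp \<and> p0 \<le> p \<and> p \<le> int i \<and> q0 \<le> F p \<and> F p \<le> int (f i)"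
      unfolding QQ_def E.Q1_def E.Q2_def p0_def q0_def using Fint[OF iD] by auto
    have iln: "i \<le> length S" "f i \<le> length St" using aD fa iD unfolding n_def m_def by auto
    define h where "h = (\<lambda>p. (nat (p - p0), nat (F p - q0)))"
    have l1: "\<And>a b. (a,b) \<in> h ` QQ \<Longrightarrow> a < length (suffix_pad (take i S) k) \<and> b < length (suffix_pad (take (f i) St) k)
        \<and> suffix_pad (take i S) k ! a = suffix_pad (take (f i) St) k ! b"
    proof -
      fix a b assume "(a,b) \<in> h ` QQ"
      then obtain p where p: "p \<in> QQ" "a = nat (p - p0)" "b = nat (F p - q0)" unfolding h_def by auto
      have pp: "p \<in> Dp" "p0 \<le> p" "p \<le> int i" "q0 \<le> F p" "F p \<le> int (f i)" using QQp[OF p(1)] by auto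
      have ak: "a < k" "b < k" using pp p unfolding p0_def q0_def by auto
      have "p0 + int a = p" "q0 + int b = F p" using pp p by auto
      then have "suffix_pad (take i S) k ! a = (if 1 \<le> p then Some (S ! nat (p - 1)) else None)"
        "suffix_pad (take (f i) St) k ! b = (if 1 \<le> F p then Some (St ! nat (F p - 1)) else None)"
        using nthX[OF iln(1) ak(1)] nthX[OF iln(2) ak(2)] unfolding p0_def q0_def by auto
      moreover have "p \<le> int n" using pp(3) aD[OF iD] by auto
      ultimately show "a < length (suffix_pad (take i S) k) \<and> b < length (suffix_pad (take (f i) St) k)
        \<and> suffix_pad (take i S) k ! a = suffix_pad (take (f i) St) k ! b" using ak sym2[OF pp(1)] by simp
    qed
    have l2: "\<And>a b a' b'. (a,b) \<in> h ` QQ \<Longrightarrow> (a',b') \<in> h ` QQ \<Longrightarrow> a < a' \<longleftrightarrow> b < b'"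
    proof -
      fix a b a' b' assume "(a,b) \<in> h ` QQ" "(a',b') \<in> h ` QQ"
      then obtain p p' where p: "p \<in> QQ" "a = nat (p - p0)" "b = nat (F p - q0)"
        and p': "p' \<in> QQ" "a' = nat (p' - p0)" "b' = nat (F p' - q0)" unfolding h_def by auto
      have pp: "p \<in> Dp" "p0 \<le> p" "q0 \<le> F p" using QQp[OF p(1)] by auto
      have pp': "p' \<in> Dp" "p0 \<le> p'" "q0 \<le> F p'" using QQp[OF p'(1)] by auto
      have "a < a' \<longleftrightarrow> p < p'" using p p' pp pp' by auto
      moreover have "b < b' \<longleftrightarrow> F p < F p'" using p p' pp pp' by auto
      moreover have "F p < F p' \<longleftrightarrow> p < p'" using E.mono_iff pp(1) pp'(1) by blast
      ultimately show "a < a' \<longleftrightarrow> b < b'" by blast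
    qed
    have "lmatch (suffix_pad (take i S) k) (suffix_pad (take (f i) St) k) (h ` QQ)"
      unfolding lmatch_def using l1 l2 by blast
    moreover have "card (h ` QQ) = card QQ"
    proof (rule card_image, rule inj_onI)
      fix p p' assume "p \<in> QQ" "p' \<in> QQ" "h p = h p'"
      then have "nat (p - p0) = nat (p' - p0)" "p0 \<le> p" "p0 \<le> p'" using QQp unfolding h_def by auto
      then show "p = p'" by linarith
    qed
    ultimately show "\<exists>M. lmatch (suffix_pad (take i S) k) (suffix_pad (take (f i) St) k) M
      \<and> card M = card (E.Q1 (int i) k \<inter> E.Q2 (int i) k)" unfolding QQ_def by blast
  qed
  define K where "K = (\<lambda>p::int. SOME k. 0 < k \<and> 1/4 < rt (take (nat p) S) (take (f (nat p)) St) k)"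
  have Kp: "\<forall>p\<in>int ` H. 0 < K p \<and> K p \<le> 4 * (E.del p (K p) + E.ins p (K p))"
  proof
    fix p assume "p \<in> int ` H"
    then obtain i where i: "i \<in> H" "p = int i" by auto
    have iD: "i \<in> D" using i HD by auto
    define k where "k = K p"
    have ex: "\<exists>k. 0 < k \<and> 1/4 < rt (take i S) (take (f i) St) k" using Hk i by auto
    have kk: "0 < k \<and> 1/4 < rt (take i S) (take (f i) St) k"
      unfolding k_def K_def using someI_ex[OF ex] i(2) by simp
    define e where "e = ED (suffix_pad (take i S) k) (suffix_pad (take (f i) St) k)"
    have "1/4 < real e / (2 * real k)" using kk unfolding rt_def e_def by simp
    then have "real k < 2 * real e" using kk by (simp add: field_simps)
    then have ke: "k < 2 * e" by linarith
    obtain M where M: "lmatch (suffix_pad (take i S) k) (suffix_pad (take (f i) St) k) M"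
      "card M = card (E.Q1 (int i) k \<inter> E.Q2 (int i) k)" using Md[OF iD] by blast
    have "e + 2 * card M \<le> 2 * k" using ED_le_match[OF M(1)] unfolding e_def by simp
    moreover have "k \<le> card (E.Q1 (int i) k \<inter> E.Q2 (int i) k) + E.del (int i) k + E.ins (int i) k"
      using E.Q_inter_card iD unfolding Dp_def by blast
    ultimately have "k \<le> 4 * (E.del (int i) k + E.ins (int i) k)" using ke M(2)
      by (intro aux1[of k e "card M"]) simp_all
    then show "0 < K p \<and> K p \<le> 4 * (E.del p (K p) + E.ins p (K p))" using kk i unfolding k_def by simp
  qed
  have "card (int ` H) \<le> 4 * (card {x. x \<le> int n \<and> x \<notin> Dp} + card {y. y \<le> int m \<and> y \<notin> F ` Dp})"
  proof (rule E.count)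
    show "finite (int ` H)" using HD finD finite_subset by blast
    show "int ` H \<subseteq> Dp" using HD unfolding Dp_def by auto
    show "\<forall>p\<in>int ` H. 0 < K p \<and> K p \<le> 4 * (E.del p (K p) + E.ins p (K p))" by (rule Kp)
    show "\<forall>p\<in>int ` H. p \<le> int n \<and> F p \<le> int m" using HD aD fa Fint by auto
  qed
  moreover have "{x. x \<le> int n \<and> x \<notin> Dp} = int ` ({1..n} - D)"
    using compD by auto
  moreover have "{y. y \<le> int m \<and> y \<notin> F ` Dp} = int ` ({1..m} - f ` D)"
    using compF by auto
  moreover have "card (int ` H) = card H" by (simp add: card_image)
  moreover have "card (int ` ({1..n} - D)) = n - card D"
    using card_Diff_subset[OF finD Dsub] by (simp add: card_image)
  moreover have "card (f ` D) = card D"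
    using sm by (intro card_image) (rule strict_mono_on_imp_inj_on)
  moreover have "card (int ` ({1..m} - f ` D)) = m - card (f ` D)"
    using card_Diff_subset[OF finite_imageI[OF finD] fD] by (simp add: card_image)
  ultimately show ?thesis unfolding n_def m_def by simp
qed

theorem theorem34:
  fixes S St :: "'a list" and \<epsilon> \<delta> :: real and D :: "nat set" and f dec :: "nat \<Rightarrow> nat"
  assumes "self_matching \<epsilon> S"
    and "valid_corruption \<delta> S St D f"
    and "min_RSD_decoding S St dec"
  shows "real (card {i\<in>D. dec (f i) \<noteq> i}) \<le> real (length S) * (4 * \<delta> + 6 * \<epsilon>)"
proof -
  define n where "n = length S"
  define m where "m = length St"
  have Dsub: "D \<subseteq> {1..n}" and fD: "f ` D \<subseteq> {1..m}"
    and errb: "real ((n - card D) + (m - card D)) \<le> real n * \<delta>"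
    using assms(2) unfolding valid_corruption_def n_def m_def by auto
  have finD: "finite D" using Dsub finite_subset by blast
  have md: "\<And>j. j \<in> {1..m} \<Longrightarrow> dec j \<in> {1..n} \<and>
        (\<forall>l\<in>{1..n}. RSD (take (dec j) S) (take j St) \<le> RSD (take l S) (take j St))"
    using assms(3) unfolding min_RSD_decoding_def n_def m_def by auto
  define Mis where "Mis = {i\<in>D. dec (f i) \<noteq> i}"
  define r where "r = (\<lambda>i. RSD (take i S) (take (f i) St))"
  define H where "H = {i\<in>Mis. 1/4 < r i}"
  define L where "L = {i\<in>Mis. r i \<le> 1/4}"
  have finMis: "finite Mis" unfolding Mis_def using finD by auto
  have "Mis = H \<union> L" unfolding H_def L_def by auto
  then have cMis: "card Mis \<le> card H + card L" by (simp add: card_Un_le)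
  have cH: "card H \<le> 4 * ((n - card D) + (m - card D))"
    unfolding n_def m_def
  proof (rule H_bound[OF assms(2)])
    show "H \<subseteq> D" unfolding H_def Mis_def by auto
    show "\<forall>i\<in>H. \<exists>k>0. 1/4 < rt (take i S) (take (f i) St) k"
      unfolding H_def r_def using RSD_gt by blast
  qed
  have cL: "\<exists>M. monotone_self_matching S M \<and> (\<forall>(a,b)\<in>M. a < b) \<and> card L \<le> 6 * card M"
  proof -
    define l where "l = (\<lambda>i. dec (f i))"
    define vv where "vv = (\<lambda>i. min i (l i))"
    define gg where "gg = (\<lambda>i. max i (l i) - min i (l i))"
    define Pp where "Pp = (\<lambda>i M. (\<forall>a b. (a,b)\<in>M \<longrightarrow> vv i < a + gg i \<and> a \<le> vv i \<and> vv i < b \<and> b \<le> vv i + gg i \<and>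
              (1 \<le> a \<and> b \<le> length S \<and> S!(a-1) = S!(b-1)))
          \<and> (\<forall>a b a' b'. (a,b)\<in>M \<longrightarrow> (a',b')\<in>M \<longrightarrow> (a<a' \<longleftrightarrow> b<b'))
          \<and> gg i \<le> 2 * card M \<and> finite M)"
    have exM: "\<forall>i\<in>L. \<exists>M. Pp i M"
    proof
      fix i assume iL: "i \<in> L"
      have iD: "i \<in> D" and li: "l i \<noteq> i" and ri: "r i \<le> 1/4"
        using iL unfolding L_def Mis_def l_def by auto
      have i1n: "1 \<le> i" "i \<le> n" using iD Dsub by auto
      have j: "f i \<in> {1..m}" using iD fD by auto
      have l1n: "l i \<in> {1..n}" and lmin: "RSD (take (l i) S) (take (f i) St) \<le> RSD (take i S) (take (f i) St)"
        using md[OF j] i1n unfolding l_def by auto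
      define g where "g = gg i"
      have gpos: "0 < g" using li unfolding g_def gg_def by auto
      define W where "W = suffix_pad (take (f i) St) g"
      have rtx: "\<And>x. x = i \<or> x = l i \<Longrightarrow> 2 * ED (suffix_pad (take x S) g) W \<le> g"
      proof -
        fix x assume x: "x = i \<or> x = l i"
        have "rt (take x S) (take (f i) St) g \<le> RSD (take x S) (take (f i) St)" using RSD_ge gpos by blast
        also have "\<dots> \<le> r i" using x lmin unfolding r_def by auto
        finally have "rt (take x S) (take (f i) St) g \<le> 1/4" using ri by linarith
        then have "real (ED (suffix_pad (take x S) g) W) / (2 * real g) \<le> 1/4" unfolding rt_def W_def .
        then have "real (ED (suffix_pad (take x S) g) W) \<le> real g / 2" using gpos by (simp add: field_simps)
        then show "2 * ED (suffix_pad (take x S) g) W \<le> g" by linarith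
      qed
      have v1: "1 \<le> vv i" using i1n l1n unfolding vv_def by auto
      have vg: "vv i + g = max i (l i)" unfolding vv_def g_def gg_def by auto
      have un: "vv i + g \<le> length S" using vg i1n l1n unfolding n_def by auto
      have e1: "2 * ED (suffix_pad (take (vv i) S) g) W \<le> g" using rtx unfolding vv_def by (simp add: min_def)
      have e2: "2 * ED (suffix_pad (take (vv i + g) S) g) W \<le> g" using rtx unfolding vg by (simp add: max_def)
      have lW: "length W = g" unfolding W_def by simp
      show "\<exists>M. Pp i M" using local_matching[OF gpos v1 un lW e1 e2] unfolding Pp_def g_def by blast
    qed
    define Ml where "Ml = (\<lambda>i. SOME M. Pp i M)"
    have Mlp: "\<And>i. i \<in> L \<Longrightarrow> Pp i (Ml i)" unfolding Ml_def using exM someI_ex by metis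
    have finL: "finite L" unfolding L_def using finMis by auto
    obtain M where M: "\<forall>a b. (a,b)\<in>M \<longrightarrow> (1 \<le> a \<and> b \<le> length S \<and> S!(a-1) = S!(b-1)) \<and> a < b"
      "\<forall>a b a' b'. (a,b)\<in>M \<longrightarrow> (a',b')\<in>M \<longrightarrow> (a<a' \<longleftrightarrow> b<b')" "card L \<le> 6 * card M"
    proof -
      have pt: "\<forall>p\<in>L. p = vv p \<or> p = vv p + gg p" unfolding vv_def gg_def by auto
      have gp: "\<forall>p\<in>L. 0 < gg p" unfolding L_def Mis_def gg_def l_def by auto
      have w: "\<forall>p\<in>L. \<forall>a b. (a,b) \<in> Ml p \<longrightarrow> vv p < a + gg p \<and> a \<le> vv p \<and> vv p < b \<and> b \<le> vv p + gg p
            \<and> (1 \<le> a \<and> b \<le> length S \<and> S!(a-1) = S!(b-1))"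
        using Mlp unfolding Pp_def by blast
      have mo: "\<forall>p\<in>L. \<forall>a b a' b'. (a,b)\<in>Ml p \<longrightarrow> (a',b')\<in>Ml p \<longrightarrow> (a<a' \<longleftrightarrow> b<b')"
        using Mlp unfolding Pp_def by blast
      have bg: "\<forall>p\<in>L. gg p \<le> 2 * card (Ml p) \<and> finite (Ml p)"
        using Mlp unfolding Pp_def by blast
      show ?thesis using vitali[OF finL pt gp w mo bg] that by blast
    qed
    have "monotone_self_matching S M"
      unfolding monotone_self_matching_def
    proof (intro conjI)
      show "M \<subseteq> {1..length S} \<times> {1..length S}"
      proof
        fix x assume "x \<in> M"
        then obtain a b where "x = (a,b)" "(a,b)\<in>M" by (cases x) auto
        then show "x \<in> {1..length S} \<times> {1..length S}" using M(1) by fastforce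
      qed
      show "\<forall>(a,b)\<in>M. S ! (a - 1) = S ! (b - 1)" using M(1) by auto
      show "\<forall>(a,b)\<in>M. \<forall>(a',b')\<in>M. a < a' \<longleftrightarrow> b < b'" using M(2) by auto
    qed
    moreover have "\<forall>(a,b)\<in>M. a < b" using M(1) by auto
    ultimately show ?thesis using M(3) by blast
  qed
  then obtain M where M: "monotone_self_matching S M" "\<forall>(a,b)\<in>M. a < b" "card L \<le> 6 * card M" by blast
  have eqM: "{(a,b)\<in>M. a \<noteq> b} = M" using M(2) by auto
  have "real (card {(a,b)\<in>M. a \<noteq> b}) < \<epsilon> * real (length S)"
    using assms(1) M(1) unfolding self_matching_def by blast
  then have "real (card M) < \<epsilon> * real n" unfolding eqM n_def .
  then have "real (card L) < 6 * \<epsilon> * real n" using M(3) by linarith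
  moreover have "real (card H) \<le> 4 * \<delta> * real n"
  proof -
    have "real (card H) \<le> real (4 * (n - card D + (m - card D)))" using cH by (simp only: of_nat_le_iff)
    also have "\<dots> = 4 * real (n - card D + (m - card D))" by simp
    also have "\<dots> \<le> 4 * (real n * \<delta>)" using errb by (rule mult_left_mono) simp
    finally show ?thesis by (simp add: algebra_simps)
  qed
  moreover have "real (card Mis) \<le> real (card H) + real (card L)" using cMis by linarith
  ultimately show ?thesis unfolding Mis_def n_def by (simp add: algebra_simps)
qed

end
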